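(* Let $(N,C,\mathbf{A},k)$ be an instance with $|N|=n$ having at least one cohesive group, and let $c_{\max}$ be its maximum EJR degree. If $n>k(k+1)^2(c_{\max}-1)$, then every committee output by $\frac{n}{k(k+1)}$-LS-PAV (i.e., $\lambda$-LS-PAV with $\lambda=\frac{n}{k(k+1)}$, from any initial committee) has EJR degree $c_{\max}$.
   Context: An instance consists of voters $N=\{1,\dots,n\}$, candidates $C$, approval ballots $A_i\subseteq C$ for $i\in N$, and a committee size $k$ with $1\le k\le|C|$. For $\ell\in\mathbb{N}$, $N'\subseteq N$ is an $\ell$-cohesive group if $|N'|\ge\ell n/k$ and $|\bigcap_{i\in N'}A_i|\ge\ell$ (a cohesive group is a $1$-cohesive group). A size-$k$ committee $W$ achieves EJR degree $c$ if for every $\ell\in\{1,\dots,k\}$ every $\ell$-cohesive group contains at least $c$ voters $i$ with $|A_i\cap W|\ge\ell$; its EJR degree is the largest such $c$, and the maximum EJR degree of the instance is the maximum over all size-$k$ committees. The PAV-score of $W$ is $s_{\mathrm{PAV}}(W)=\sum_{i=1}^n\sum_{j=1}^{|A_i\cap W|}\frac1j$, and $\Delta(W,c^+,c^-)=s_{\mathrm{PAV}}((W\setminus\{c^-\})\cup\{c^+\})-s_{\mathrm{PAV}}(W)$. The algorithm $\lambda$-LS-PAV starts from an arbitrary size-$k$ committee $W$ and, while there exist $c^+\notin W$ and $c^-\in W$ with $\Delta(W,c^+,c^-)\ge\lambda$, replaces $W$ by $(W\setminus\{c^-\})\cup\{c^+\}$; it then outputs $W$. *)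

theory Defs
  imports Complex_Main
begin

text \<open>Voters are N = {1..n}; candidates form a finite set C; ballots A i are subsets of C.\<close>

definition cohesive_group ::
  "nat \<Rightarrow> 'c set \<Rightarrow> (nat \<Rightarrow> 'c set) \<Rightarrow> nat \<Rightarrow> nat \<Rightarrow> nat set \<Rightarrow> bool" where
  "cohesive_group n C A k l N' \<longleftrightarrow>
     N' \<subseteq> {1..n} \<and> real (card N') \<ge> real l * real n / real k \<and>
     card (C \<inter> (\<Inter>i\<in>N'. A i)) \<ge> l"

definition is_committee :: "'c set \<Rightarrow> nat \<Rightarrow> 'c set \<Rightarrow> bool" where
  "is_committee C k W \<longleftrightarrow> W \<subseteq> C \<and> card W = k"

definition achieves_ejr_degree ::
  "nat \<Rightarrow> 'c set \<Rightarrow> (nat \<Rightarrow> 'c set) \<Rightarrow> nat \<Rightarrow> 'c set \<Rightarrow> nat \<Rightarrow> bool" where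
  "achieves_ejr_degree n C A k W c \<longleftrightarrow>
     (\<forall>l\<in>{1..k}. \<forall>N'. cohesive_group n C A k l N' \<longrightarrow>
        card {i\<in>N'. card (A i \<inter> W) \<ge> l} \<ge> c)"

definition ejr_degree ::
  "nat \<Rightarrow> 'c set \<Rightarrow> (nat \<Rightarrow> 'c set) \<Rightarrow> nat \<Rightarrow> 'c set \<Rightarrow> nat" where
  "ejr_degree n C A k W = (GREATEST c. achieves_ejr_degree n C A k W c)"

definition max_ejr_degree ::
  "nat \<Rightarrow> 'c set \<Rightarrow> (nat \<Rightarrow> 'c set) \<Rightarrow> nat \<Rightarrow> nat" where
  "max_ejr_degree n C A k = Max {ejr_degree n C A k W | W. is_committee C k W}"

definition pav_score :: "nat \<Rightarrow> (nat \<Rightarrow> 'c set) \<Rightarrow> 'c set \<Rightarrow> real" where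
  "pav_score n A W = (\<Sum>i\<in>{1..n}. \<Sum>j\<in>{1..card (A i \<inter> W)}. 1 / real j)"

definition pav_delta :: "nat \<Rightarrow> (nat \<Rightarrow> 'c set) \<Rightarrow> 'c set \<Rightarrow> 'c \<Rightarrow> 'c \<Rightarrow> real" where
  "pav_delta n A W cp cm = pav_score n A ((W - {cm}) \<union> {cp}) - pav_score n A W"

definition ls_pav_step ::
  "real \<Rightarrow> nat \<Rightarrow> 'c set \<Rightarrow> (nat \<Rightarrow> 'c set) \<Rightarrow> 'c set \<Rightarrow> 'c set \<Rightarrow> bool" where
  "ls_pav_step lam n C A W W' \<longleftrightarrow>
     (\<exists>cp cm. cp \<in> C - W \<and> cm \<in> W \<and> pav_delta n A W cp cm \<ge> lam \<and>
              W' = (W - {cm}) \<union> {cp})"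

definition ls_pav_output ::
  "real \<Rightarrow> nat \<Rightarrow> 'c set \<Rightarrow> (nat \<Rightarrow> 'c set) \<Rightarrow> nat \<Rightarrow> 'c set \<Rightarrow> bool" where
  "ls_pav_output lam n C A k W \<longleftrightarrow>
     (\<exists>W0. is_committee C k W0 \<and> (ls_pav_step lam n C A)\<^sup>*\<^sup>* W0 W) \<and>
     \<not> (\<exists>W'. ls_pav_step lam n C A W W')"

end

theory Submission imports Defs begin

definition harm :: "nat \<Rightarrow> real" where "harm m = (\<Sum>j\<in>{1..m}. 1 / real j)"

lemma harm_Suc: "harm (Suc m) = harm m + 1 / (real m + 1)"
  unfolding harm_def by (simp add: add.commute)

lemma pav_score_harm: "pav_score n A W = (\<Sum>i\<in>{1..n}. harm (card (A i \<inter> W)))"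
  unfolding pav_score_def harm_def by simp

lemma card_swap:
  assumes "finite X" "cp \<notin> W"
  shows "card (X \<inter> ((W - {cm}) \<union> {cp})) =
    (if cp \<in> X then 1 else 0) + (if cm \<in> X \<and> cm \<in> W then card (X \<inter> W) - 1 else card (X \<inter> W))"
proof -
  have e: "X \<inter> ((W - {cm}) \<union> {cp}) = (if cp \<in> X then insert cp ((X \<inter> W) - {cm}) else (X \<inter> W) - {cm})"
    by auto
  have f: "finite ((X \<inter> W) - {cm})" using assms by simp
  have n: "cp \<notin> (X \<inter> W) - {cm}" using assms by simp
  show ?thesis unfolding e using f n assms
    by (auto simp: card_Diff_singleton_if)
qed

lemma voter_sum:
  fixes X W :: "'c set"
  assumes "finite X" "finite W" "cp \<notin> W"
  shows "(\<Sum>cm\<in>W. harm (card (X \<inter> ((W - {cm}) \<union> {cp}))) - harm (card (X \<inter> W)))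
     \<ge> (if cp \<in> X then (real (card W) + 1) / (real (card (X \<inter> W)) + 1) else 0) - 1"
proof -
  define u where "u = card (X \<inter> W)"
  define g where "g = (\<lambda>cm. harm (card (X \<inter> ((W - {cm}) \<union> {cp}))) - harm (card (X \<inter> W)))"
  have split: "sum g W = sum g (W \<inter> X) + sum g (W - X)"
    by (metis assms(2) sum.Int_Diff)
  have cW: "card W = u + card (W - X)" unfolding u_def
    by (metis Int_commute assms(2) card_Int_Diff)
  have cI: "card (W \<inter> X) = u" unfolding u_def by (simp add: Int_commute)
  show ?thesis
  proof (cases "cp \<in> X")
    case True
    have g1: "\<And>cm. cm \<in> W \<inter> X \<Longrightarrow> g cm = 0"
    proof -
      fix cm assume cm: "cm \<in> W \<inter> X"
      then have "u \<ge> 1" unfolding u_def using assms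
        by (metis Int_commute card_0_eq empty_iff finite_Int less_one linorder_not_less)
      then show "g cm = 0" unfolding g_def using card_swap[OF assms(1,3), of cm] cm True u_def by simp
    qed
    have g2: "\<And>cm. cm \<in> W - X \<Longrightarrow> g cm = 1 / (real u + 1)"
      unfolding g_def using card_swap[OF assms(1,3)] True u_def harm_Suc by simp
    have "sum g W = real (card (W - X)) / (real u + 1)"
      using split g1 g2 by simp
    also have "\<dots> = (real (card W) + 1) / (real u + 1) - 1"
      using cW by (simp add: field_simps)
    finally show ?thesis using True unfolding g_def u_def by simp
  next
    case False
    have g2: "\<And>cm. cm \<in> W - X \<Longrightarrow> g cm = 0"
      unfolding g_def using card_swap[OF assms(1,3)] False by simp
    have g1: "\<And>cm. cm \<in> W \<inter> X \<Longrightarrow> g cm = - 1 / real u"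
    proof -
      fix cm assume cm: "cm \<in> W \<inter> X"
      then have "u \<ge> 1" unfolding u_def using assms
        by (metis Int_commute card_0_eq empty_iff finite_Int less_one linorder_not_less)
      then obtain v where v: "u = Suc v" by (cases u) auto
      have "g cm = harm v - harm (Suc v)" unfolding g_def using card_swap[OF assms(1,3), of cm] cm False
        by (simp add: u_def[symmetric] v)
      then show "g cm = - 1 / real u" using harm_Suc[of v] v by simp
    qed
    have "sum g W = real u * (- 1 / real u)"
      using split g1 g2 cI by simp
    also have "\<dots> \<ge> -1" by (cases "u = 0") auto
    finally show ?thesis using False unfolding g_def u_def by simp
  qed
qed


lemma total_sum:
  assumes "finite C" "\<And>i. i \<in> {1..n} \<Longrightarrow> A i \<subseteq> C" "W \<subseteq> C" "cp \<notin> W"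
  shows "(\<Sum>cm\<in>W. pav_delta n A W cp cm) \<ge>
    (\<Sum>i\<in>{1..n}. (if cp \<in> A i then (real (card W) + 1) / (real (card (A i \<inter> W)) + 1) else 0)) - real n"
proof -
  have fW: "finite W" using assms finite_subset by blast
  have "(\<Sum>cm\<in>W. pav_delta n A W cp cm) =
     (\<Sum>cm\<in>W. \<Sum>i\<in>{1..n}. harm (card (A i \<inter> ((W - {cm}) \<union> {cp}))) - harm (card (A i \<inter> W)))"
    unfolding pav_delta_def pav_score_harm by (simp add: sum_subtractf)
  also have "\<dots> = (\<Sum>i\<in>{1..n}. \<Sum>cm\<in>W. harm (card (A i \<inter> ((W - {cm}) \<union> {cp}))) - harm (card (A i \<inter> W)))"
    by (rule sum.swap)
  also have "\<dots> \<ge> (\<Sum>i\<in>{1..n}. (if cp \<in> A i then (real (card W) + 1) / (real (card (A i \<inter> W)) + 1) else 0) - 1)"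
    apply (rule sum_mono)
    apply (rule voter_sum)
    subgoal for i using assms(1) assms(2)[of i] finite_subset by blast
    using fW apply simp
    using assms(4) apply simp
    done
  finally show ?thesis by (simp add: sum_subtractf)
qed

lemma committee_inv:
  assumes "(ls_pav_step lam n C A)\<^sup>*\<^sup>* W0 W" "is_committee C k W0" "finite C"
  shows "is_committee C k W"
  using assms(1,2)
proof (induction rule: rtranclp_induct)
  case base then show ?case .
next
  case (step y z)
  then obtain cp cm where s: "cp \<in> C - y" "cm \<in> y" "z = (y - {cm}) \<union> {cp}"
    unfolding ls_pav_step_def by blast
  have "is_committee C k y" using step by simp
  then have fy: "finite y" "y \<subseteq> C" "card y = k" unfolding is_committee_def using assms(3) finite_subset by auto
  have "card y > 0" using fy s by (metis card_gt_0_iff empty_iff)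
  then have "card z = k" using s fy by (simp add: card_Diff_singleton)
  moreover have "z \<subseteq> C" using s fy by auto
  ultimately show ?case unfolding is_committee_def by simp
qed

lemma main_bound:
  fixes n k l c :: nat
  assumes fC: "finite C" and AC: "\<And>i. i \<in> {1..n} \<Longrightarrow> A i \<subseteq> C" and k1: "1 \<le> k"
    and Wc: "is_committee C k W"
    and nostep: "\<And>cp cm. cp \<in> C - W \<Longrightarrow> cm \<in> W \<Longrightarrow> pav_delta n A W cp cm < real n / (real k * (real k + 1))"
    and coh: "cohesive_group n C A k l N'" and l: "l \<in> {1..k}"
    and big: "real n > real k * (real k + 1)^2 * (real c - 1)"
  shows "card {i\<in>N'. card (A i \<inter> W) \<ge> l} \<ge> c"
proof (rule ccontr)
  define S where "S = {i\<in>N'. card (A i \<inter> W) \<ge> l}"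
  define U where "U = N' - S"
  assume "\<not> card {i\<in>N'. card (A i \<inter> W) \<ge> l} \<ge> c"
  then have Sc: "real (card S) \<le> real c - 1" unfolding S_def by simp
  have N'sub: "N' \<subseteq> {1..n}" and N'card: "real (card N') \<ge> real l * real n / real k"
    and T: "card (C \<inter> (\<Inter>i\<in>N'. A i)) \<ge> l"
    using coh unfolding cohesive_group_def by auto
  have fN: "finite N'" using N'sub finite_subset by blast
  have SN: "S \<subseteq> N'" unfolding S_def by auto
  have cU: "real (card U) = real (card N') - real (card S)"
    unfolding U_def using SN fN by (simp add: card_Diff_subset finite_subset card_mono of_nat_diff)
  have kpos: "real k > 0" using k1 by simp
  have lpos: "real l \<ge> 1" using l by simp
  define K where "K = real k"
  define L where "L = real l"
  define m where "m = real n"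
  have Kp: "K > 0" and Lp: "L \<ge> 1" and mp: "m \<ge> 0" using kpos lpos unfolding K_def L_def m_def by auto
  have Ubig: "real (card U) * (K + 1)^2 > L * m * (K + 2)"
  proof -
    have a: "real (card U) \<ge> L * m / K - (real c - 1)" using cU N'card Sc unfolding L_def m_def K_def by simp
    have b: "K * (K+1)^2 * (real c - 1) < m" using big unfolding K_def m_def by simp
    have "K * (K+1)^2 * real (card U) \<ge> K * (K+1)^2 * (L * m / K - (real c - 1))"
      using a Kp by (simp add: mult_left_mono)
    also have "K * (K+1)^2 * (L * m / K - (real c - 1)) = L * m * (K+1)^2 - K * (K+1)^2 * (real c - 1)"
      using Kp by (simp add: field_simps)
    finally have c1: "K * (K+1)^2 * real (card U) > L * m * (K+1)^2 - m" using b by linarith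
    have "L * m \<ge> m" using Lp mp by (metis mult_1 mult_right_mono)
    then have "K * (K+1)^2 * real (card U) > L * m * (K+1)^2 - L * m" using c1 by linarith
    also have "L * m * (K+1)^2 - L * m = K * (L * m * (K + 2))" by (simp add: algebra_simps power2_eq_square)
    finally have "K * (L * m * (K + 2)) < K * ((K+1)^2 * real (card U))" by (simp add: algebra_simps)
    then show ?thesis using Kp by (simp add: mult.commute)
  qed
  have "L * m * (K + 2) \<ge> 0" using Lp mp Kp by simp
  then have "card U > 0" using Ubig by (cases "card U = 0") auto
  then obtain i0 where i0: "i0 \<in> U" by (metis card_gt_0_iff ex_in_conv)
  have i0N: "i0 \<in> N'" and i0l: "card (A i0 \<inter> W) < l" using i0 unfolding U_def S_def by auto
  have fA0: "finite (A i0)" using AC[of i0] i0N N'sub fC finite_subset by blast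
  obtain cp where cp: "cp \<in> C" "cp \<notin> W" "\<And>i. i \<in> N' \<Longrightarrow> cp \<in> A i"
  proof -
    have "\<not> (C \<inter> (\<Inter>i\<in>N'. A i)) \<subseteq> W"
    proof
      assume "(C \<inter> (\<Inter>i\<in>N'. A i)) \<subseteq> W"
      then have "C \<inter> (\<Inter>i\<in>N'. A i) \<subseteq> A i0 \<inter> W" using i0N by auto
      then have "card (C \<inter> (\<Inter>i\<in>N'. A i)) \<le> card (A i0 \<inter> W)" using fA0 by (simp add: card_mono)
      then show False using T i0l by simp
    qed
    then show ?thesis using that by auto
  qed
  have WC: "W \<subseteq> C" and cW: "card W = k" using Wc unfolding is_committee_def by auto
  have fW: "finite W" using WC fC finite_subset by blast
  define f where "f = (\<lambda>i. (if cp \<in> A i then (real (card W) + 1) / (real (card (A i \<inter> W)) + 1) else 0))"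
  have lower: "(\<Sum>cm\<in>W. pav_delta n A W cp cm) \<ge> sum f {1..n} - m"
    unfolding f_def m_def by (rule total_sum[OF fC AC WC cp(2)])
  have "sum f U \<le> sum f {1..n}"
    apply (rule sum_mono2) using N'sub unfolding U_def f_def by auto
  moreover have "sum f U \<ge> sum (\<lambda>i. (K + 1) / L) U"
  proof (rule sum_mono)
    fix i assume iU: "i \<in> U"
    then have "cp \<in> A i" "card (A i \<inter> W) + 1 \<le> l" using cp(3) unfolding U_def S_def by auto
    then show "(K + 1) / L \<le> f i" unfolding f_def K_def L_def using cW lpos
      by (auto intro!: divide_left_mono)
  qed
  ultimately have lower2: "(\<Sum>cm\<in>W. pav_delta n A W cp cm) \<ge> real (card U) * (K + 1) / L - m"
    using lower by simp
  have "(\<Sum>cm\<in>W. pav_delta n A W cp cm) < (\<Sum>cm\<in>W. m / (K * (K + 1)))"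
    apply (rule sum_strict_mono[OF fW])
    using cW k1 apply force
    using nostep cp unfolding m_def K_def by auto
  also have "\<dots> = m / (K + 1)" using cW Kp unfolding K_def by simp
  finally have "real (card U) * (K + 1) / L - m < m / (K + 1)" using lower2 by linarith
  then have "(real (card U) * (K + 1) / L) * (L * (K+1)) < (m + m / (K + 1)) * (L * (K+1))"
    using Lp Kp by (intro mult_strict_right_mono) auto
  moreover have "(real (card U) * (K + 1) / L) * (L * (K+1)) = real (card U) * (K + 1)^2"
    using Lp by (simp add: power2_eq_square)
  moreover have "(m + m / (K + 1)) * (L * (K+1)) = L * m * (K + 2)"
    using Kp by (simp add: field_simps)
  ultimately have "real (card U) * (K + 1)^2 < L * m * (K + 2)" by simp
  then show False using Ubig by simp
qed


theorem corollary2: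
  fixes n k :: nat and C :: "'c set" and A :: "nat \<Rightarrow> 'c set" and W :: "'c set"
  assumes "finite C"
    and "\<And>i. i \<in> {1..n} \<Longrightarrow> A i \<subseteq> C"
    and "1 \<le> k" and "k \<le> card C"
    and "\<exists>N'. cohesive_group n C A k 1 N'"
    and "real n > real k * (real k + 1)^2 * (real (max_ejr_degree n C A k) - 1)"
    and "ls_pav_output (real n / (real k * (real k + 1))) n C A k W"
  shows "ejr_degree n C A k W = max_ejr_degree n C A k"
proof -
  define cmx where "cmx = max_ejr_degree n C A k"
  obtain W0 where W0: "is_committee C k W0" "(ls_pav_step (real n / (real k * (real k + 1))) n C A)\<^sup>*\<^sup>* W0 W"
    and ns: "\<not> (\<exists>W'. ls_pav_step (real n / (real k * (real k + 1))) n C A W W')"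
    using assms(7) unfolding ls_pav_output_def by blast
  have Wc: "is_committee C k W" using committee_inv[OF W0(2) W0(1) assms(1)] .
  have nostep: "\<And>cp cm. cp \<in> C - W \<Longrightarrow> cm \<in> W \<Longrightarrow> pav_delta n A W cp cm < real n / (real k * (real k + 1))"
  proof -
    fix cp cm assume h: "cp \<in> C - W" "cm \<in> W"
    show "pav_delta n A W cp cm < real n / (real k * (real k + 1))"
    proof (rule ccontr)
      assume "\<not> ?thesis"
      then have "ls_pav_step (real n / (real k * (real k + 1))) n C A W ((W - {cm}) \<union> {cp})"
        unfolding ls_pav_step_def using h by (intro exI[of _ cp] exI[of _ cm]) auto
      then show False using ns by blast
    qed
  qed
  obtain N1 where N1: "cohesive_group n C A k 1 N1" using assms(5) by blast
  have fN1: "finite N1" using N1 unfolding cohesive_group_def using finite_subset by blast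
  have bound: "\<And>c. achieves_ejr_degree n C A k W c \<Longrightarrow> c \<le> card N1"
  proof -
    fix c assume "achieves_ejr_degree n C A k W c"
    then have "card {i\<in>N1. card (A i \<inter> W) \<ge> 1} \<ge> c"
      using N1 assms(3) unfolding achieves_ejr_degree_def by auto
    moreover have "card {i\<in>N1. card (A i \<inter> W) \<ge> 1} \<le> card N1"
      using fN1 by (intro card_mono) auto
    ultimately show "c \<le> card N1" by simp
  qed
  have ach: "achieves_ejr_degree n C A k W cmx"
    unfolding achieves_ejr_degree_def
  proof (intro ballI allI impI)
    fix l N' assume l: "l \<in> {1..k}" and coh: "cohesive_group n C A k l N'"
    show "cmx \<le> card {i\<in>N'. card (A i \<inter> W) \<ge> l}"
      by (rule main_bound[OF assms(1,2,3) Wc nostep coh l]) (use assms(6) cmx_def in auto)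
  qed
  have ge: "cmx \<le> ejr_degree n C A k W"
    unfolding ejr_degree_def by (rule Greatest_le_nat[where P="achieves_ejr_degree n C A k W", OF ach]) (use bound in blast)
  have fin: "finite {ejr_degree n C A k W | W. is_committee C k W}"
  proof -
    have "{ejr_degree n C A k W | W. is_committee C k W} \<subseteq> (\<lambda>W. ejr_degree n C A k W) ` Pow C"
      unfolding is_committee_def by auto
    then show ?thesis using assms(1) finite_subset by blast
  qed
  have le: "ejr_degree n C A k W \<le> cmx"
    unfolding cmx_def max_ejr_degree_def by (rule Max_ge[OF fin]) (use Wc in blast)
  show ?thesis using ge le cmx_def by simp
qed

end
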